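(* In the common-ownership game below, suppose $\kappa_{ij}=\kappa$ for all $i\ne j$, where $\kappa\ge0$ and $2+\alpha(1-\kappa)>0$. Then every equilibrium $(\mathbf A^{\rm d},\mathbf q^{\rm d})$ with $\operatorname{rank}(\mathbf A^{\rm d})\ge2$ satisfies $$\mathbf A^{\rm d}\mathbf q^{\rm d}=\frac{\boldsymbol\beta}{1+\kappa},\qquad \mathbf q^{\rm d}=\frac{\boldsymbol\gamma}{2+\alpha(1-\kappa)},\qquad \bar s_{\boldsymbol\gamma}(\mathbf A^{\rm d})=\frac{\Big(\frac{2+\alpha(1-\kappa)}{1+\kappa}\Big)^2-\|\boldsymbol\gamma\|_2^2}{n(n-1)}.$$ Moreover, an equilibrium satisfying the first two equalities exists if and only if $r(\boldsymbol\gamma)\le\frac{2+\alpha(1-\kappa)}{1+\kappa}\le R(\boldsymbol\gamma)$.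
   Context: Model: integers $n\ge2$, $m\ge2$; $\alpha>0$, $\boldsymbol\beta\in\mathbb R^m$ with $\|\boldsymbol\beta\|_2=1$, $\boldsymbol\gamma\in\mathbb R^n$ with all $\gamma_i>0$. Firm $i$ chooses a unit vector $\mathbf a_i\in\mathbb R^m$ and $q_i\ge0$; $\mathbf A=[\mathbf a_1,\dots,\mathbf a_n]$. Standalone profit: $\Pi_i=\alpha q_i\mathbf a_i^\top(\boldsymbol\beta-\sum_{j\ne i}q_j\mathbf a_j)-(1+\alpha)q_i^2+\gamma_iq_i$. With ownership weights $\kappa_{ij}$ ($\kappa_{ii}=1$), firm $i$ maximizes $\tilde\Pi_i=\Pi_i+\sum_{j\ne i}\kappa_{ij}\Pi_j$; an equilibrium is a profile of mutual best responses. $\bar s_{\boldsymbol\gamma}(\mathbf A)=\binom n2^{-1}\sum_{1\le i<j\le n}\gamma_i\gamma_j\mathbf a_i^\top\mathbf a_j$. $R(\mathbf v)=\|\mathbf v\|_1$, $r(\mathbf v)=2\|\mathbf v\|_\infty-\|\mathbf v\|_1$. *)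

theory Defs
  imports "HOL-Analysis.Analysis"
begin

(* Firms are indexed by 0..n-1 (nat), strategies a i :: real^'m (column i of A),
   quantities q i :: real. Only indices < n are relevant. *)

definition profit ::
  "nat \<Rightarrow> real \<Rightarrow> real^'m \<Rightarrow> (nat \<Rightarrow> real) \<Rightarrow>
   (nat \<Rightarrow> real^'m) \<Rightarrow> (nat \<Rightarrow> real) \<Rightarrow> nat \<Rightarrow> real" where
  "profit n \<alpha> \<beta> \<gamma> a q i =
     \<alpha> * q i * (a i \<bullet> (\<beta> - (\<Sum>j\<in>{..<n} - {i}. q j *\<^sub>R a j)))
     - (1 + \<alpha>) * (q i)\<^sup>2 + \<gamma> i * q i"

definition co_profit ::
  "nat \<Rightarrow> real \<Rightarrow> real^'m \<Rightarrow> (nat \<Rightarrow> real) \<Rightarrow> (nat \<Rightarrow> nat \<Rightarrow> real) \<Rightarrow>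
   (nat \<Rightarrow> real^'m) \<Rightarrow> (nat \<Rightarrow> real) \<Rightarrow> nat \<Rightarrow> real" where
  "co_profit n \<alpha> \<beta> \<gamma> K a q i =
     profit n \<alpha> \<beta> \<gamma> a q i + (\<Sum>j\<in>{..<n} - {i}. K i j * profit n \<alpha> \<beta> \<gamma> a q j)"

definition equilibrium ::
  "nat \<Rightarrow> real \<Rightarrow> real^'m \<Rightarrow> (nat \<Rightarrow> real) \<Rightarrow> (nat \<Rightarrow> nat \<Rightarrow> real) \<Rightarrow>
   (nat \<Rightarrow> real^'m) \<Rightarrow> (nat \<Rightarrow> real) \<Rightarrow> bool" where
  "equilibrium n \<alpha> \<beta> \<gamma> K a q \<longleftrightarrow>
     (\<forall>i<n. norm (a i) = 1 \<and> q i \<ge> 0 \<and>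
        (\<forall>a' q'. norm (a' :: real^'m) = 1 \<longrightarrow> q' \<ge> 0 \<longrightarrow>
           co_profit n \<alpha> \<beta> \<gamma> K (a(i := a')) (q(i := q')) i
             \<le> co_profit n \<alpha> \<beta> \<gamma> K a q i))"

definition rankA :: "nat \<Rightarrow> (nat \<Rightarrow> real^'m) \<Rightarrow> nat" where
  "rankA n a = dim (a ` {..<n})"

definition Aq :: "nat \<Rightarrow> (nat \<Rightarrow> real^'m) \<Rightarrow> (nat \<Rightarrow> real) \<Rightarrow> real^'m" where
  "Aq n a q = (\<Sum>i<n. q i *\<^sub>R a i)"

definition sbar :: "nat \<Rightarrow> (nat \<Rightarrow> real) \<Rightarrow> (nat \<Rightarrow> real^'m) \<Rightarrow> real" where
  "sbar n \<gamma> a = (\<Sum>(i,j)\<in>{(i,j). i < j \<and> j < n}. \<gamma> i * \<gamma> j * (a i \<bullet> a j))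
                  / real (n choose 2)"

definition norm1 :: "nat \<Rightarrow> (nat \<Rightarrow> real) \<Rightarrow> real" where
  "norm1 n v = (\<Sum>i<n. \<bar>v i\<bar>)"

definition norminf :: "nat \<Rightarrow> (nat \<Rightarrow> real) \<Rightarrow> real" where
  "norminf n v = Max ((\<lambda>i. \<bar>v i\<bar>) ` {..<n})"

definition norm2sq :: "nat \<Rightarrow> (nat \<Rightarrow> real) \<Rightarrow> real" where
  "norm2sq n v = (\<Sum>i<n. (v i)\<^sup>2)"

definition Rfun :: "nat \<Rightarrow> (nat \<Rightarrow> real) \<Rightarrow> real" where
  "Rfun n v = norm1 n v"

definition rfun :: "nat \<Rightarrow> (nat \<Rightarrow> real) \<Rightarrow> real" where
  "rfun n v = 2 * norminf n v - norm1 n v"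

end

theory Submission
  imports Defs
begin



lemma unit_dist:
  fixes T :: "real^'m"
  assumes m2: "CARD('m) \<ge> 2" and G: "G > 0" and l1: "\<bar>norm T - G\<bar> \<le> L'" and l2: "L' \<le> norm T + G"
  shows "\<exists>a. norm a = 1 \<and> norm (T - G *\<^sub>R a) = L'"
proof (cases "T = 0")
  case True
  then have "L' = G" using l1 l2 G by auto
  moreover obtain e :: "real^'m" where "norm e = 1"
    by (metis norm_sgn sgn_zero_iff zero_neq_one vector_choose_size)
  ultimately show ?thesis using True G by (intro exI[of _ e]) simp
next
  case False
  define L where "L = norm T"
  have Lp: "L > 0" using False L_def by simp
  obtain p :: "real^'m" where p0: "p \<noteq> 0" and po: "orthogonal T p"
    using orthogonal_to_vector_exists[of T] m2 by auto
  define u where "u = (1 / norm p) *\<^sub>R p"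
  define t where "t = (1 / L) *\<^sub>R T"
  have uu: "u \<bullet> u = 1" using p0 unfolding u_def by (simp add: power2_norm_eq_inner[symmetric] power2_eq_square)
  have tt: "t \<bullet> t = 1" using Lp unfolding t_def L_def by (simp add: power2_norm_eq_inner[symmetric] power2_eq_square)
  have tu: "t \<bullet> u = 0" using po unfolding t_def u_def orthogonal_def by simp
  have Tt: "T = L *\<^sub>R t" using Lp unfolding t_def by simp
  define c where "c = (L^2 + G^2 - L'^2) / (2 * G * L)"
  have L'0: "L' \<ge> 0" using l1 by linarith
  have "(L - G)^2 \<le> L'^2" using l1 L'0 L_def by (metis abs_le_square_iff abs_of_nonneg)
  moreover have "L'^2 \<le> (L + G)^2" using l2 L'0 L_def by (simp add: power_mono)
  ultimately have "\<bar>L^2 + G^2 - L'^2\<bar> \<le> 2 * G * L"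
    by (simp add: power2_eq_square algebra_simps abs_le_iff)
  then have "\<bar>c\<bar> \<le> 1" unfolding c_def using G Lp by (simp add: abs_divide abs_mult divide_le_eq)
  then have c1: "c^2 \<le> 1" by (simp add: abs_square_le_1)
  define s where "s = sqrt (1 - c^2)"
  have ss: "s^2 = 1 - c^2" using c1 unfolding s_def by simp
  define a where "a = c *\<^sub>R t + s *\<^sub>R u"
  have aa: "a \<bullet> a = 1" unfolding a_def using uu tt tu ss
    by (simp add: inner_commute power2_eq_square algebra_simps)
  have "(T - G *\<^sub>R a) \<bullet> (T - G *\<^sub>R a) = L^2 - 2*G*L*c + G^2"
    unfolding a_def Tt using uu tt tu ss
    apply (simp add: inner_diff_left inner_diff_right inner_commute power2_eq_square algebra_simps)
    by (metis distrib_left mult.right_neutral)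
  also have "\<dots> = L'^2" unfolding c_def using G Lp by (simp add: field_simps)
  finally have "norm (T - G *\<^sub>R a) = L'" using L'0
    by (metis power2_norm_eq_inner real_sqrt_abs abs_of_nonneg norm_ge_zero real_sqrt_unique)
  moreover have "norm a = 1" using aa by (metis norm_eq_sqrt_inner real_sqrt_one)
  ultimately show ?thesis by blast
qed

lemma polygon:
  fixes \<gamma> :: "nat \<Rightarrow> real" and T :: "real^'m"
  assumes m2: "CARD('m) \<ge> 2" and gp: "\<forall>i<n. \<gamma> i > 0"
    and up: "norm T \<le> (\<Sum>i<n. \<gamma> i)"
    and lo: "\<forall>i<n. 2 * \<gamma> i \<le> norm T + (\<Sum>j<n. \<gamma> j)"
  shows "\<exists>a. (\<forall>i<n. norm (a i) = 1) \<and> (\<Sum>i<n. \<gamma> i *\<^sub>R a i) = T"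
  using gp up lo
proof (induction n arbitrary: T)
  case 0
  then show ?case by simp
next
  case (Suc n)
  define G where "G = \<gamma> n"
  define S where "S = (\<Sum>i<n. \<gamma> i)"
  define L' where "L' = min S (norm T + G)"
  have G0: "G > 0" using Suc.prems G_def by simp
  have S0: "S \<ge> 0" unfolding S_def using Suc.prems(1) by (intro sum_nonneg) (simp add: less_imp_le)
  have tot: "(\<Sum>i<Suc n. \<gamma> i) = S + G" by (simp add: S_def G_def)
  have hn: "2 * G \<le> norm T + S + G" using Suc.prems(3) tot G_def by auto
  have "\<bar>norm T - G\<bar> \<le> L'" unfolding L'_def using Suc.prems(2) tot hn G0 norm_ge_zero[of T] by (auto simp: abs_le_iff)
  moreover have "L' \<le> norm T + G" unfolding L'_def by simp
  ultimately obtain b where b1: "norm b = 1" and b2: "norm (T - G *\<^sub>R b) = L'"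
    using unit_dist[OF m2 G0] by blast
  have gi: "\<gamma> i \<le> S" if "i < n" for i
    unfolding S_def using Suc.prems(1) that
    by (intro member_le_sum) (auto simp: less_imp_le)
  have "\<exists>a. (\<forall>i<n. norm (a i) = 1) \<and> (\<Sum>i<n. \<gamma> i *\<^sub>R a i) = T - G *\<^sub>R b"
  proof (rule Suc.IH)
    show "\<forall>i<n. 0 < \<gamma> i" using Suc.prems by simp
    show "norm (T - G *\<^sub>R b) \<le> (\<Sum>i<n. \<gamma> i)" using b2 by (simp add: L'_def S_def)
    show "\<forall>i<n. 2 * \<gamma> i \<le> norm (T - G *\<^sub>R b) + (\<Sum>j<n. \<gamma> j)"
    proof (intro allI impI)
      fix i assume i: "i < n"
      have "2 * \<gamma> i \<le> norm T + (S + G)" using Suc.prems(3) tot i by auto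
      then show "2 * \<gamma> i \<le> norm (T - G *\<^sub>R b) + (\<Sum>j<n. \<gamma> j)"
        using gi[OF i] b2 unfolding L'_def S_def[symmetric] by auto
    qed
  qed
  then obtain a where a1: "\<forall>i<n. norm (a i) = 1" and a2: "(\<Sum>i<n. \<gamma> i *\<^sub>R a i) = T - G *\<^sub>R b"
    by blast
  define a' where "a' = a(n := b)"
  have "(\<Sum>i<Suc n. \<gamma> i *\<^sub>R a' i) = (\<Sum>i<n. \<gamma> i *\<^sub>R a i) + G *\<^sub>R b"
  proof -
    have "(\<Sum>i<n. \<gamma> i *\<^sub>R a' i) = (\<Sum>i<n. \<gamma> i *\<^sub>R a i)" unfolding a'_def by (intro sum.cong) auto
    then show ?thesis by (simp add: a'_def G_def)
  qed
  then have "(\<Sum>i<Suc n. \<gamma> i *\<^sub>R a' i) = T" using a2 by simp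
  moreover have "\<forall>i<Suc n. norm (a' i) = 1" using a1 b1 unfolding a'_def by (auto simp: less_Suc_eq)
  ultimately show ?case by blast
qed



lemma co_profit_upd:
  fixes a :: "nat \<Rightarrow> real^'m" and a' :: "real^'m"
  assumes i: "i < n"
  shows "co_profit n \<alpha> \<beta> \<gamma> (\<lambda>i j. \<kappa>) (a(i:=a')) (q(i:=q')) i =
     \<alpha> * q' * (a' \<bullet> (\<beta> - (1+\<kappa>) *\<^sub>R (\<Sum>j\<in>{..<n}-{i}. q j *\<^sub>R a j))) - (1+\<alpha>) * q'^2 + \<gamma> i * q'
     + \<kappa> * (\<Sum>j\<in>{..<n}-{i}. \<alpha> * q j * (a j \<bullet> (\<beta> - (\<Sum>k\<in>{..<n}-{j}-{i}. q k *\<^sub>R a k)))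
              - (1+\<alpha>)*(q j)^2 + \<gamma> j * q j)"
proof -
  define S where "S = (\<Sum>j\<in>{..<n}-{i}. q j *\<^sub>R a j)"
  have h1: "(\<Sum>j\<in>{..<n}-{i}. (q(i:=q')) j *\<^sub>R (a(i:=a')) j) = S"
    unfolding S_def by (rule sum.cong) auto
  have p1: "profit n \<alpha> \<beta> \<gamma> (a(i:=a')) (q(i:=q')) i = \<alpha> * q' * (a' \<bullet> (\<beta> - S)) - (1+\<alpha>) * q'^2 + \<gamma> i * q'"
    unfolding profit_def h1 by simp
  have p2: "profit n \<alpha> \<beta> \<gamma> (a(i:=a')) (q(i:=q')) j =
      (\<alpha> * q j * (a j \<bullet> (\<beta> - (\<Sum>k\<in>{..<n}-{j}-{i}. q k *\<^sub>R a k))) - (1+\<alpha>)*(q j)^2 + \<gamma> j * q j)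
      - \<alpha> * q' * (q j * (a j \<bullet> a'))" if j: "j \<in> {..<n}-{i}" for j
  proof -
    have "(\<Sum>k\<in>{..<n}-{j}. (q(i:=q')) k *\<^sub>R (a(i:=a')) k)
        = (q(i:=q')) i *\<^sub>R (a(i:=a')) i + (\<Sum>k\<in>{..<n}-{j}-{i}. (q(i:=q')) k *\<^sub>R (a(i:=a')) k)"
      using i j by (intro sum.remove) auto
    also have "\<dots> = q' *\<^sub>R a' + (\<Sum>k\<in>{..<n}-{j}-{i}. q k *\<^sub>R a k)"
      by (intro arg_cong2[where f="(+)"] sum.cong) auto
    finally have e: "(\<Sum>k\<in>{..<n}-{j}. (q(i:=q')) k *\<^sub>R (a(i:=a')) k) = q' *\<^sub>R a' + (\<Sum>k\<in>{..<n}-{j}-{i}. q k *\<^sub>R a k)" .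
    have qj: "(q(i:=q')) j = q j" "(a(i:=a')) j = a j" using j by auto
    define X where "X = a j \<bullet> (\<Sum>k\<in>{..<n}-{j}-{i}. q k *\<^sub>R a k)"
    define P where "P = a j \<bullet> a'"
    define B where "B = a j \<bullet> \<beta>"
    show ?thesis unfolding profit_def e qj
      apply (simp only: inner_diff_right inner_add_right inner_scaleR_right)
      unfolding X_def[symmetric] P_def[symmetric] B_def[symmetric]
      by (simp add: algebra_simps)
  qed
  have "(\<Sum>j\<in>{..<n}-{i}. \<kappa> * profit n \<alpha> \<beta> \<gamma> (a(i:=a')) (q(i:=q')) j)
      = \<kappa> * (\<Sum>j\<in>{..<n}-{i}. \<alpha> * q j * (a j \<bullet> (\<beta> - (\<Sum>k\<in>{..<n}-{j}-{i}. q k *\<^sub>R a k)))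
              - (1+\<alpha>)*(q j)^2 + \<gamma> j * q j) - \<kappa> * \<alpha> * q' * (\<Sum>j\<in>{..<n}-{i}. q j * (a j \<bullet> a'))"
  proof -
    have "(\<Sum>j\<in>{..<n}-{i}. \<kappa> * profit n \<alpha> \<beta> \<gamma> (a(i:=a')) (q(i:=q')) j)
      = (\<Sum>j\<in>{..<n}-{i}. \<kappa> * (\<alpha> * q j * (a j \<bullet> (\<beta> - (\<Sum>k\<in>{..<n}-{j}-{i}. q k *\<^sub>R a k)))
              - (1+\<alpha>)*(q j)^2 + \<gamma> j * q j) - (\<kappa> * \<alpha> * q') * (q j * (a j \<bullet> a')))"
      by (rule sum.cong) (simp_all add: p2 right_diff_distrib)
    also have "\<dots> = \<kappa> * (\<Sum>j\<in>{..<n}-{i}. \<alpha> * q j * (a j \<bullet> (\<beta> - (\<Sum>k\<in>{..<n}-{j}-{i}. q k *\<^sub>R a k)))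
              - (1+\<alpha>)*(q j)^2 + \<gamma> j * q j) - \<kappa> * \<alpha> * q' * (\<Sum>j\<in>{..<n}-{i}. q j * (a j \<bullet> a'))"
      by (simp only: sum_subtractf sum_distrib_left)
    finally show ?thesis .
  qed
  moreover have "(\<Sum>j\<in>{..<n}-{i}. q j * (a j \<bullet> a')) = a' \<bullet> S"
    unfolding S_def by (simp add: inner_sum_right inner_commute)
  ultimately show ?thesis unfolding co_profit_def p1 S_def[symmetric]
    by (simp add: inner_diff_right algebra_simps)
qed



lemma br_nec:
  fixes V a0 :: "real^'m"
  assumes al: "\<alpha> > 0" and g: "g > 0" and a0: "norm a0 = 1" and q0: "q0 \<ge> 0"
    and opt: "\<And>b s. norm b = 1 \<Longrightarrow> s \<ge> 0 \<Longrightarrow>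
       \<alpha> * s * (b \<bullet> V) - (1+\<alpha>) * s^2 + g * s \<le> \<alpha> * q0 * (a0 \<bullet> V) - (1+\<alpha>) * q0^2 + g * q0"
  shows "V = norm V *\<^sub>R a0 \<and> 2 * (1+\<alpha>) * q0 = \<alpha> * norm V + g"
proof -
  have qpos: "q0 > 0"
  proof (rule ccontr)
    assume "\<not> q0 > 0"
    then have z: "q0 = 0" using q0 by simp
    define s where "s = g / (2 * (1+\<alpha>))"
    have s0: "s > 0" unfolding s_def using al g by simp
    obtain b where b1: "norm b = 1" and b2: "b \<bullet> V \<ge> 0"
    proof (cases "a0 \<bullet> V \<ge> 0")
      case True then show ?thesis using that a0 by blast
    next
      case False then show ?thesis using that[of "-a0"] a0 by simp
    qed
    have "\<alpha> * s * (b \<bullet> V) - (1+\<alpha>) * s^2 + g * s \<le> 0" using opt[OF b1 less_imp_le[OF s0]] z by simp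
    moreover have "\<alpha> * s * (b \<bullet> V) \<ge> 0" using al s0 b2 by simp
    moreover have "(1+\<alpha>) * s^2 = g * s/2"
    proof -
      have h: "(1+\<alpha>) * s = g/2" using al by (simp add: s_def field_simps)
      have "(1+\<alpha>) * s^2 = ((1+\<alpha>) * s) * s" by (simp add: power2_eq_square)
      also have "\<dots> = g * s/2" using h by simp
      finally show ?thesis .
    qed
    moreover have "g * s > 0" using s0 g by simp
    ultimately show False by linarith
  qed
  have ip: "a0 \<bullet> V \<le> norm V" using norm_cauchy_schwarz[of a0 V] a0 by simp
  have ipe: "a0 \<bullet> V = norm V"
  proof (cases "V = 0")
    case True then show ?thesis by simp
  next
    case False
    define b where "b = (1 / norm V) *\<^sub>R V"
    have b1: "norm b = 1" unfolding b_def using False by simp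
    have bV: "b \<bullet> V = norm V" unfolding b_def using False
      by (simp add: power2_norm_eq_inner[symmetric] power2_eq_square)
    have "\<alpha> * q0 * (b \<bullet> V) \<le> \<alpha> * q0 * (a0 \<bullet> V)" using opt[OF b1 q0] by simp
    then have "norm V \<le> a0 \<bullet> V" using bV al qpos by simp
    then show ?thesis using ip by simp
  qed
  have e1: "V = norm V *\<^sub>R a0" using norm_cauchy_schwarz_eq[of a0 V] ipe a0 by simp
  define s where "s = (\<alpha> * norm V + g) / (2 * (1+\<alpha>))"
  have s0: "s \<ge> 0" unfolding s_def using al g by simp
  have "\<alpha> * s * (a0 \<bullet> V) - (1+\<alpha>) * s^2 + g * s \<le> \<alpha> * q0 * (a0 \<bullet> V) - (1+\<alpha>) * q0^2 + g * q0"
    using opt[OF a0 s0] .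
  moreover have "\<alpha> * norm V + g = 2 * (1+\<alpha>) * s" unfolding s_def using al by simp
  then have gs: "g = 2 * (1+\<alpha>) * s - \<alpha> * norm V" by simp
  ultimately have "(1+\<alpha>) * (q0 - s)^2 \<le> 0" unfolding ipe gs
    by (simp add: power2_eq_square algebra_simps)
  then have "(q0 - s)^2 \<le> 0" using al by (simp add: mult_le_0_iff)
  then have "q0 = s" by simp
  then have "2 * (1+\<alpha>) * q0 = \<alpha> * norm V + g" unfolding s_def using al by simp
  with e1 show ?thesis by blast
qed

lemma br_suf:
  fixes V a0 b :: "real^'m"
  assumes al: "\<alpha> > 0" and a0: "norm a0 = 1"
    and e1: "V = norm V *\<^sub>R a0" and e2: "2 * (1+\<alpha>) * q0 = \<alpha> * norm V + g"
    and b: "norm b = 1" and s: "s \<ge> 0"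
  shows "\<alpha> * s * (b \<bullet> V) - (1+\<alpha>) * s^2 + g * s \<le> \<alpha> * q0 * (a0 \<bullet> V) - (1+\<alpha>) * q0^2 + g * q0"
proof -
  have aV: "a0 \<bullet> V = norm V" using a0 e1
    by (metis inner_scaleR_right mult.right_neutral norm_eq_sqrt_inner real_sqrt_eq_1_iff)
  have "b \<bullet> V \<le> norm V" using norm_cauchy_schwarz[of b V] b by simp
  then have "\<alpha> * s * (b \<bullet> V) \<le> \<alpha> * s * norm V" using al s by (simp add: mult_left_mono)
  moreover have "\<alpha> * s * norm V - (1+\<alpha>) * s^2 + g * s \<le> \<alpha> * q0 * norm V - (1+\<alpha>) * q0^2 + g * q0"
  proof -
    have g: "g = 2 * (1+\<alpha>) * q0 - \<alpha> * norm V" using e2 by simp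
    have "(\<alpha> * q0 * norm V - (1+\<alpha>) * q0^2 + g * q0) - (\<alpha> * s * norm V - (1+\<alpha>) * s^2 + g * s) = (1+\<alpha>) * (s - q0)^2"
      unfolding g by (simp add: power2_eq_square algebra_simps)
    moreover have "(1+\<alpha>) * (s - q0)^2 \<ge> 0" using al by simp
    ultimately show ?thesis by linarith
  qed
  ultimately show ?thesis unfolding aV by linarith
qed



lemma eq_char:
  fixes a :: "nat \<Rightarrow> real^'m"
  assumes al: "\<alpha> > 0" and gp: "\<forall>i<n. \<gamma> i > 0"
  shows "equilibrium n \<alpha> \<beta> \<gamma> (\<lambda>i j. \<kappa>) a q \<longleftrightarrow>
    (\<forall>i<n. norm (a i) = 1 \<and> q i \<ge> 0 \<and>
       (\<beta> - (1+\<kappa>) *\<^sub>R (\<Sum>j\<in>{..<n}-{i}. q j *\<^sub>R a j))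
          = norm (\<beta> - (1+\<kappa>) *\<^sub>R (\<Sum>j\<in>{..<n}-{i}. q j *\<^sub>R a j)) *\<^sub>R a i \<and>
       2 * (1+\<alpha>) * q i = \<alpha> * norm (\<beta> - (1+\<kappa>) *\<^sub>R (\<Sum>j\<in>{..<n}-{i}. q j *\<^sub>R a j)) + \<gamma> i)"
    (is "?L \<longleftrightarrow> (\<forall>i<n. ?R i)")
proof -
  have key: "(\<forall>a' q'. norm (a' :: real^'m) = 1 \<longrightarrow> q' \<ge> 0 \<longrightarrow>
           co_profit n \<alpha> \<beta> \<gamma> (\<lambda>i j. \<kappa>) (a(i := a')) (q(i := q')) i
             \<le> co_profit n \<alpha> \<beta> \<gamma> (\<lambda>i j. \<kappa>) a q i) \<longleftrightarrow>
       (\<forall>b s. norm (b :: real^'m) = 1 \<longrightarrow> s \<ge> 0 \<longrightarrow>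
         \<alpha> * s * (b \<bullet> (\<beta> - (1+\<kappa>) *\<^sub>R (\<Sum>j\<in>{..<n}-{i}. q j *\<^sub>R a j))) - (1+\<alpha>) * s^2 + \<gamma> i * s
         \<le> \<alpha> * q i * (a i \<bullet> (\<beta> - (1+\<kappa>) *\<^sub>R (\<Sum>j\<in>{..<n}-{i}. q j *\<^sub>R a j))) - (1+\<alpha>) * (q i)^2 + \<gamma> i * q i)"
    if i: "i < n" for i
  proof -
    have c0: "co_profit n \<alpha> \<beta> \<gamma> (\<lambda>i j. \<kappa>) a q i =
     \<alpha> * q i * (a i \<bullet> (\<beta> - (1+\<kappa>) *\<^sub>R (\<Sum>j\<in>{..<n}-{i}. q j *\<^sub>R a j))) - (1+\<alpha>) * (q i)^2 + \<gamma> i * q i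
     + \<kappa> * (\<Sum>j\<in>{..<n}-{i}. \<alpha> * q j * (a j \<bullet> (\<beta> - (\<Sum>k\<in>{..<n}-{j}-{i}. q k *\<^sub>R a k)))
              - (1+\<alpha>)*(q j)^2 + \<gamma> j * q j)"
      using co_profit_upd[OF i, where a=a and q=q and a'="a i" and q'="q i" and \<alpha>=\<alpha> and \<beta>=\<beta> and \<gamma>=\<gamma> and \<kappa>=\<kappa>] by simp
    show ?thesis unfolding c0 co_profit_upd[OF i] by simp
  qed
  show ?thesis
  proof
    assume L: ?L
    show "\<forall>i<n. ?R i"
    proof (intro allI impI)
      fix i assume i: "i < n"
      have Li: "norm (a i) = 1 \<and> q i \<ge> 0 \<and> (\<forall>a' q'. norm (a' :: real^'m) = 1 \<longrightarrow> q' \<ge> 0 \<longrightarrow>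
           co_profit n \<alpha> \<beta> \<gamma> (\<lambda>i j. \<kappa>) (a(i := a')) (q(i := q')) i
             \<le> co_profit n \<alpha> \<beta> \<gamma> (\<lambda>i j. \<kappa>) a q i)"
        using L[unfolded equilibrium_def, rule_format, OF i] .
      have a1: "norm (a i) = 1" using Li by (rule conjunct1)
      have q0: "q i \<ge> 0" using Li[THEN conjunct2] by (rule conjunct1)
      have opt: "\<forall>b s. norm (b :: real^'m) = 1 \<longrightarrow> s \<ge> 0 \<longrightarrow>
         \<alpha> * s * (b \<bullet> (\<beta> - (1+\<kappa>) *\<^sub>R (\<Sum>j\<in>{..<n}-{i}. q j *\<^sub>R a j))) - (1+\<alpha>) * s^2 + \<gamma> i * s
         \<le> \<alpha> * q i * (a i \<bullet> (\<beta> - (1+\<kappa>) *\<^sub>R (\<Sum>j\<in>{..<n}-{i}. q j *\<^sub>R a j))) - (1+\<alpha>) * (q i)^2 + \<gamma> i * q i"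
        using key[OF i, THEN iffD1, OF Li[THEN conjunct2, THEN conjunct2]] .
      have gi: "\<gamma> i > 0" using gp i by blast
      have br: "(\<beta> - (1+\<kappa>) *\<^sub>R (\<Sum>j\<in>{..<n}-{i}. q j *\<^sub>R a j))
          = norm (\<beta> - (1+\<kappa>) *\<^sub>R (\<Sum>j\<in>{..<n}-{i}. q j *\<^sub>R a j)) *\<^sub>R a i \<and>
       2 * (1+\<alpha>) * q i = \<alpha> * norm (\<beta> - (1+\<kappa>) *\<^sub>R (\<Sum>j\<in>{..<n}-{i}. q j *\<^sub>R a j)) + \<gamma> i"
        by (rule br_nec[OF al gi a1 q0, OF opt[rule_format]])
      show "?R i" by (rule conjI[OF a1 conjI[OF q0 br]])
    qed
  next
    assume R: "\<forall>i<n. ?R i"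
    show ?L unfolding equilibrium_def
    proof (rule allI, rule impI, intro conjI)
      fix i assume i: "i < n"
      note Ri = R[rule_format, OF i]
      show "norm (a i) = 1" using Ri by (rule conjunct1)
      show "q i \<ge> 0" using Ri[THEN conjunct2] by (rule conjunct1)
      have a1: "norm (a i) = 1" using Ri by (rule conjunct1)
      note e1 = Ri[THEN conjunct2, THEN conjunct2, THEN conjunct1]
      note e2 = Ri[THEN conjunct2, THEN conjunct2, THEN conjunct2]
      show "\<forall>a' q'. norm (a' :: real^'m) = 1 \<longrightarrow> q' \<ge> 0 \<longrightarrow>
           co_profit n \<alpha> \<beta> \<gamma> (\<lambda>i j. \<kappa>) (a(i := a')) (q(i := q')) i
             \<le> co_profit n \<alpha> \<beta> \<gamma> (\<lambda>i j. \<kappa>) a q i"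
        unfolding key[OF i] by (intro allI impI br_suf[OF al a1 e1 e2])
    qed
  qed
qed

lemma pair_sum:
  fixes h :: "nat \<Rightarrow> nat \<Rightarrow> real"
  assumes sym: "\<And>i j. h i j = h j i"
  shows "(\<Sum>i<n. \<Sum>j<n. h i j) = (\<Sum>i<n. h i i) + 2 * (\<Sum>(i,j)\<in>{(i,j). i < j \<and> j < n}. h i j)"
proof (induction n)
  case 0
  then show ?case by simp
next
  case (Suc n)
  have set: "{(i,j). i < j \<and> j < Suc n} = {(i,j). i < j \<and> j < n} \<union> (\<lambda>i. (i, n)) ` {..<n}"
    by (auto simp: less_Suc_eq)
  have fin: "finite {(i,j). i < j \<and> j < n}"
    by (rule finite_subset[of _ "{..<n} \<times> {..<n}"]) auto
  have "(\<Sum>(i,j)\<in>{(i,j). i < j \<and> j < Suc n}. h i j)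
      = (\<Sum>(i,j)\<in>{(i,j). i < j \<and> j < n}. h i j) + (\<Sum>(i,j)\<in>(\<lambda>i. (i, n)) ` {..<n}. h i j)"
    unfolding set by (rule sum.union_disjoint) (auto simp: fin)
  also have "(\<Sum>(i,j)\<in>(\<lambda>i. (i, n)) ` {..<n}. h i j) = (\<Sum>i<n. h i n)"
    by (subst sum.reindex) (auto simp: inj_on_def)
  finally have e: "(\<Sum>(i,j)\<in>{(i,j). i < j \<and> j < Suc n}. h i j)
      = (\<Sum>(i,j)\<in>{(i,j). i < j \<and> j < n}. h i j) + (\<Sum>i<n. h i n)" .
  have "(\<Sum>i<Suc n. \<Sum>j<Suc n. h i j) = (\<Sum>i<n. \<Sum>j<n. h i j) + (\<Sum>i<n. h i n) + (\<Sum>j<n. h n j) + h n n"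
    by (simp add: sum.distrib)
  also have "(\<Sum>j<n. h n j) = (\<Sum>i<n. h i n)" using sym by simp
  finally show ?case using Suc.IH e by simp
qed

lemma choose2_real: "real (n choose 2) = real n * (real n - 1) / 2"
proof (induction n)
  case 0 then show ?case by simp
next
  case (Suc n)
  have "(Suc n choose 2) = (n choose 1) + (n choose 2)" by (simp add: numeral_2_eq_2)
  then have "real (Suc n choose 2) = real n + real (n choose 2)" by simp
  then show ?case using Suc.IH by (simp add: field_simps)
qed



lemma aq_split:
  fixes a :: "nat \<Rightarrow> real^'m"
  assumes "i < n"
  shows "Aq n a q = q i *\<^sub>R a i + (\<Sum>j\<in>{..<n}-{i}. q j *\<^sub>R a j)"
  unfolding Aq_def using assms by (intro sum.remove) auto

lemma gsum_sq:
  fixes a :: "nat \<Rightarrow> real^'m" and \<gamma> :: "nat \<Rightarrow> real"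
  assumes a1: "\<forall>i<n. norm (a i) = 1"
  shows "(\<Sum>i<n. \<gamma> i *\<^sub>R a i) \<bullet> (\<Sum>i<n. \<gamma> i *\<^sub>R a i)
     = norm2sq n \<gamma> + 2 * (\<Sum>(i,j)\<in>{(i,j). i < j \<and> j < n}. \<gamma> i * \<gamma> j * (a i \<bullet> a j))"
proof -
  have "(\<Sum>i<n. \<gamma> i *\<^sub>R a i) \<bullet> (\<Sum>i<n. \<gamma> i *\<^sub>R a i) = (\<Sum>i<n. \<Sum>j<n. \<gamma> i * \<gamma> j * (a i \<bullet> a j))"
    apply (simp add: inner_sum_left inner_sum_right sum_distrib_left mult.assoc)
    by (intro sum.cong refl) (simp add: inner_commute)
  also have "\<dots> = (\<Sum>i<n. \<gamma> i * \<gamma> i * (a i \<bullet> a i)) + 2 * (\<Sum>(i,j)\<in>{(i,j). i < j \<and> j < n}. \<gamma> i * \<gamma> j * (a i \<bullet> a j))"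
    by (rule pair_sum) (simp add: inner_commute mult.commute)
  also have "(\<Sum>i<n. \<gamma> i * \<gamma> i * (a i \<bullet> a i)) = norm2sq n \<gamma>"
    unfolding norm2sq_def
  proof (rule sum.cong)
    fix i assume "i \<in> {..<n}"
    then have "a i \<bullet> a i = 1" using a1 by (metis lessThan_iff norm_eq_sqrt_inner real_sqrt_eq_1_iff)
    then show "\<gamma> i * \<gamma> i * (a i \<bullet> a i) = (\<gamma> i)\<^sup>2" by (simp add: power2_eq_square)
  qed simp
  finally show ?thesis .
qed



lemma half_div: "((x::real) / 2) / (y / 2) = x / y"
  by (cases "y = 0") (simp_all add: field_simps)

lemma part1:
  fixes n :: nat and \<alpha> \<kappa> :: real and \<beta> :: "real^'m" and \<gamma> :: "nat \<Rightarrow> real"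
    and a :: "nat \<Rightarrow> real^'m" and q :: "nat \<Rightarrow> real"
  assumes n2: "n \<ge> 2"
    and al: "\<alpha> > 0" and nb: "norm \<beta> = 1" and gp: "\<forall>i<n. \<gamma> i > 0"
    and k0: "\<kappa> \<ge> 0" and Dp: "2 + \<alpha> * (1 - \<kappa>) > 0"
    and eq: "equilibrium n \<alpha> \<beta> \<gamma> (\<lambda>i j. \<kappa>) a q" and rk: "rankA n a \<ge> 2"
  shows "Aq n a q = (1 / (1 + \<kappa>)) *\<^sub>R \<beta> \<and>
          (\<forall>i<n. q i = \<gamma> i / (2 + \<alpha> * (1 - \<kappa>))) \<and>
          sbar n \<gamma> a = (((2 + \<alpha> * (1 - \<kappa>)) / (1 + \<kappa>))\<^sup>2 - norm2sq n \<gamma>)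
                         / (real n * (real n - 1))"
proof -
  define D where "D = 2 + \<alpha> * (1 - \<kappa>)"
  have D0: "D > 0" using Dp D_def by simp
  have k1: "1 + \<kappa> > 0" using k0 by simp
  define V where "V i = \<beta> - (1+\<kappa>) *\<^sub>R (\<Sum>j\<in>{..<n}-{i}. q j *\<^sub>R a j)" for i
  have E: "\<forall>i<n. norm (a i) = 1 \<and> q i \<ge> 0 \<and> V i = norm (V i) *\<^sub>R a i \<and>
       2 * (1+\<alpha>) * q i = \<alpha> * norm (V i) + \<gamma> i"
    using eq unfolding eq_char[OF al gp] V_def .
  have a1: "norm (a i) = 1" if "i < n" for i using E that by blast
  define W where "W = \<beta> - (1+\<kappa>) *\<^sub>R Aq n a q"
  define c where "c i = norm (V i) - (1+\<kappa>) * q i" for i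
  have Wi: "W = c i *\<^sub>R a i" if i: "i < n" for i
  proof -
    have "W = V i - (1+\<kappa>) *\<^sub>R (q i *\<^sub>R a i)"
      unfolding W_def V_def aq_split[OF i] by (simp add: algebra_simps)
    also have "\<dots> = norm (V i) *\<^sub>R a i - ((1+\<kappa>) * q i) *\<^sub>R a i" using E i by (metis scaleR_scaleR)
    also have "\<dots> = c i *\<^sub>R a i" unfolding c_def by (simp add: scaleR_diff_left)
    finally show ?thesis .
  qed
  have W0: "W = 0"
  proof (rule ccontr)
    assume Wn: "W \<noteq> 0"
    have "a i \<in> span {W}" if i: "i < n" for i
    proof -
      have "c i \<noteq> 0" using Wi[OF i] Wn by auto
      then have "a i = (1 / c i) *\<^sub>R W" using Wi[OF i] by simp
      then show ?thesis by (metis span_base span_scale singletonI)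
    qed
    then have "a ` {..<n} \<subseteq> span {W}" by auto
    then have "dim (a ` {..<n}) \<le> card {W}" by (intro dim_le_card) auto
    then show False using rk unfolding rankA_def by simp
  qed
  have AQ: "Aq n a q = (1 / (1 + \<kappa>)) *\<^sub>R \<beta>"
  proof -
    have "\<beta> = (1+\<kappa>) *\<^sub>R Aq n a q" using W0 unfolding W_def by simp
    then show ?thesis using k1 by simp
  qed
  have Q: "q i = \<gamma> i / D" if i: "i < n" for i
  proof -
    have "c i *\<^sub>R a i = 0" using Wi[OF i] W0 by simp
    then have "c i = 0" using a1[OF i] by auto
    then have "norm (V i) = (1+\<kappa>) * q i" unfolding c_def by simp
    then have "2 * (1+\<alpha>) * q i = \<alpha> * ((1+\<kappa>) * q i) + \<gamma> i" using E i by simp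
    then have "q i * D = \<gamma> i" unfolding D_def by (simp add: algebra_simps)
    then show ?thesis using D0 by (simp add: field_simps)
  qed
  define G where "G = (\<Sum>i<n. \<gamma> i *\<^sub>R a i)"
  have "G = D *\<^sub>R Aq n a q"
    unfolding G_def Aq_def scaleR_sum_right
    by (intro sum.cong refl) (use D0 Q in simp)
  then have GL: "G = (D / (1+\<kappa>)) *\<^sub>R \<beta>" using AQ by simp
  have "G \<bullet> G = (D / (1+\<kappa>))^2" unfolding GL using nb
    by (simp add: power2_eq_square power2_norm_eq_inner[symmetric])
  then have P: "(\<Sum>(i,j)\<in>{(i,j). i < j \<and> j < n}. \<gamma> i * \<gamma> j * (a i \<bullet> a j)) = ((D / (1+\<kappa>))^2 - norm2sq n \<gamma>) / 2"
    using gsum_sq[of n a \<gamma>] a1 unfolding G_def by simp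
  have "sbar n \<gamma> a = (((D / (1+\<kappa>))^2 - norm2sq n \<gamma>) / 2) / (real n * (real n - 1) / 2)"
    unfolding sbar_def P choose2_real ..
  also have "\<dots> = ((D / (1+\<kappa>))^2 - norm2sq n \<gamma>) / (real n * (real n - 1))"
    by (rule half_div)
  finally show ?thesis using AQ Q unfolding D_def by blast
qed



lemma part2:
  fixes n :: nat and \<alpha> \<kappa> :: real and \<beta> :: "real^'m" and \<gamma> :: "nat \<Rightarrow> real"
  assumes n2: "n \<ge> 2" and m2: "CARD('m) \<ge> 2"
    and al: "\<alpha> > 0" and nb: "norm \<beta> = 1" and gp: "\<forall>i<n. \<gamma> i > 0"
    and k0: "\<kappa> \<ge> 0" and Dp: "2 + \<alpha> * (1 - \<kappa>) > 0"
  shows "(\<exists>(a :: nat \<Rightarrow> real^'m) q.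
        equilibrium n \<alpha> \<beta> \<gamma> (\<lambda>i j. \<kappa>) a q \<and>
        Aq n a q = (1 / (1 + \<kappa>)) *\<^sub>R \<beta> \<and>
        (\<forall>i<n. q i = \<gamma> i / (2 + \<alpha> * (1 - \<kappa>))))
      \<longleftrightarrow> rfun n \<gamma> \<le> (2 + \<alpha> * (1 - \<kappa>)) / (1 + \<kappa>)
          \<and> (2 + \<alpha> * (1 - \<kappa>)) / (1 + \<kappa>) \<le> Rfun n \<gamma>"
proof -
  define D where "D = 2 + \<alpha> * (1 - \<kappa>)"
  have D0: "D > 0" using Dp D_def by simp
  have k1: "1 + \<kappa> > 0" using k0 by simp
  define L where "L = D / (1 + \<kappa>)"
  have L0: "L > 0" unfolding L_def using D0 k1 by simp
  have Rf: "Rfun n \<gamma> = (\<Sum>i<n. \<gamma> i)" unfolding Rfun_def norm1_def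
    using gp by (intro sum.cong) auto
  have fin: "finite ((\<lambda>i. \<bar>\<gamma> i\<bar>) ` {..<n})" by simp
  have ne: "(\<lambda>i. \<bar>\<gamma> i\<bar>) ` {..<n} \<noteq> {}" using n2 by (auto simp: lessThan_empty_iff)
  have rf: "rfun n \<gamma> = 2 * norminf n \<gamma> - (\<Sum>i<n. \<gamma> i)"
    unfolding rfun_def Rfun_def[symmetric] Rf ..
  have split: "(\<Sum>i<n. f i) = f k + (\<Sum>i\<in>{..<n}-{k}. f i)" if "k < n" for k and f :: "nat \<Rightarrow> 'z::comm_monoid_add"
    using that by (intro sum.remove) auto
  show ?thesis unfolding D_def[symmetric] L_def[symmetric]
  proof
    assume "\<exists>(a :: nat \<Rightarrow> real^'m) q. equilibrium n \<alpha> \<beta> \<gamma> (\<lambda>i j. \<kappa>) a q \<and>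
        Aq n a q = (1 / (1 + \<kappa>)) *\<^sub>R \<beta> \<and> (\<forall>i<n. q i = \<gamma> i / D)"
    then obtain a :: "nat \<Rightarrow> real^'m" and q where eq: "equilibrium n \<alpha> \<beta> \<gamma> (\<lambda>i j. \<kappa>) a q"
      and AQ: "Aq n a q = (1 / (1 + \<kappa>)) *\<^sub>R \<beta>" and Q: "\<forall>i<n. q i = \<gamma> i / D" by blast
    have a1: "norm (a i) = 1" if "i < n" for i using eq that unfolding equilibrium_def by blast
    define G where "G = (\<Sum>i<n. \<gamma> i *\<^sub>R a i)"
    have "G = D *\<^sub>R Aq n a q"
      unfolding G_def Aq_def scaleR_sum_right
      by (intro sum.cong refl) (use D0 Q in simp)
    then have GL: "G = L *\<^sub>R \<beta>" using AQ unfolding L_def by simp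
    then have nG: "norm G = L" using nb L0 by simp
    have ng: "norm (\<gamma> i *\<^sub>R a i) = \<gamma> i" if "i < n" for i using a1[OF that] gp[rule_format, OF that] by simp
    have "norm G \<le> (\<Sum>i<n. norm (\<gamma> i *\<^sub>R a i))" unfolding G_def by (rule norm_sum)
    also have "\<dots> = (\<Sum>i<n. \<gamma> i)" using ng by (intro sum.cong) auto
    finally have up: "L \<le> Rfun n \<gamma>" using nG Rf by simp
    obtain k where k: "k < n" and kM: "norminf n \<gamma> = \<bar>\<gamma> k\<bar>"
      using Max_in[OF fin ne] unfolding norminf_def by auto
    have "\<gamma> k *\<^sub>R a k = G - (\<Sum>i\<in>{..<n}-{k}. \<gamma> i *\<^sub>R a i)"
      unfolding G_def split[OF k] by simp
    then have "\<gamma> k \<le> norm G + norm (\<Sum>i\<in>{..<n}-{k}. \<gamma> i *\<^sub>R a i)"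
      using ng[OF k] by (metis norm_triangle_ineq4)
    also have "norm (\<Sum>i\<in>{..<n}-{k}. \<gamma> i *\<^sub>R a i) \<le> (\<Sum>i\<in>{..<n}-{k}. norm (\<gamma> i *\<^sub>R a i))"
      by (rule norm_sum)
    also have "(\<Sum>i\<in>{..<n}-{k}. norm (\<gamma> i *\<^sub>R a i)) = (\<Sum>i\<in>{..<n}-{k}. \<gamma> i)"
      using ng by (intro sum.cong) auto
    finally have "\<gamma> k \<le> L + (\<Sum>i\<in>{..<n}-{k}. \<gamma> i)" using nG by simp
    moreover have "(\<Sum>i<n. \<gamma> i) = \<gamma> k + (\<Sum>i\<in>{..<n}-{k}. \<gamma> i)" by (rule split[OF k])
    moreover have "norminf n \<gamma> = \<gamma> k" using kM gp[rule_format, OF k] by simp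
    ultimately have "rfun n \<gamma> \<le> L" unfolding rf by simp
    with up show "rfun n \<gamma> \<le> L \<and> L \<le> Rfun n \<gamma>" by blast
  next
    assume cond: "rfun n \<gamma> \<le> L \<and> L \<le> Rfun n \<gamma>"
    have nT: "norm (L *\<^sub>R \<beta>) = L" using nb L0 by simp
    have lo: "\<forall>i<n. 2 * \<gamma> i \<le> norm (L *\<^sub>R \<beta>) + (\<Sum>j<n. \<gamma> j)"
    proof (intro allI impI)
      fix i assume i: "i < n"
      have "\<bar>\<gamma> i\<bar> \<le> norminf n \<gamma>" unfolding norminf_def using fin i by (intro Max_ge) auto
      then show "2 * \<gamma> i \<le> norm (L *\<^sub>R \<beta>) + (\<Sum>j<n. \<gamma> j)" using cond nT rf gp[rule_format, OF i] by simp
    qed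
    obtain a :: "nat \<Rightarrow> real^'m" where a1: "\<forall>i<n. norm (a i) = 1"
      and aT: "(\<Sum>i<n. \<gamma> i *\<^sub>R a i) = L *\<^sub>R \<beta>"
      using polygon[OF m2 gp _ lo] cond nT Rf by auto
    define q where "q i = \<gamma> i / D" for i
    have "Aq n a q = (1 / D) *\<^sub>R (\<Sum>i<n. \<gamma> i *\<^sub>R a i)"
      unfolding Aq_def q_def scaleR_sum_right by simp
    then have AQ: "Aq n a q = (1 / (1 + \<kappa>)) *\<^sub>R \<beta>" using aT D0 unfolding L_def by simp
    have bAQ: "\<beta> = (1+\<kappa>) *\<^sub>R Aq n a q" using AQ k1 by simp
    have "equilibrium n \<alpha> \<beta> \<gamma> (\<lambda>i j. \<kappa>) a q"
      unfolding eq_char[OF al gp]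
    proof (intro allI impI conjI)
      fix i assume i: "i < n"
      show "norm (a i) = 1" using a1 i by simp
      show "q i \<ge> 0" unfolding q_def using gp i D0 by (simp add: less_imp_le)
      have V: "\<beta> - (1+\<kappa>) *\<^sub>R (\<Sum>j\<in>{..<n}-{i}. q j *\<^sub>R a j) = ((1+\<kappa>) * q i) *\<^sub>R a i"
        using bAQ unfolding aq_split[OF i] by (simp add: algebra_simps)
      have qn: "(1+\<kappa>) * q i \<ge> 0" unfolding q_def using gp[rule_format, OF i] D0 k1 by simp
      have nV: "norm (\<beta> - (1+\<kappa>) *\<^sub>R (\<Sum>j\<in>{..<n}-{i}. q j *\<^sub>R a j)) = (1+\<kappa>) * q i"
        unfolding V using a1 i qn by simp
      show "\<beta> - (1+\<kappa>) *\<^sub>R (\<Sum>j\<in>{..<n}-{i}. q j *\<^sub>R a j)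
          = norm (\<beta> - (1+\<kappa>) *\<^sub>R (\<Sum>j\<in>{..<n}-{i}. q j *\<^sub>R a j)) *\<^sub>R a i"
        unfolding nV by (rule V)
      have "q i * D = \<gamma> i" unfolding q_def using D0 by simp
      then show "2 * (1+\<alpha>) * q i = \<alpha> * norm (\<beta> - (1+\<kappa>) *\<^sub>R (\<Sum>j\<in>{..<n}-{i}. q j *\<^sub>R a j)) + \<gamma> i"
        unfolding nV D_def by (simp add: algebra_simps)
    qed
    then show "\<exists>(a :: nat \<Rightarrow> real^'m) q. equilibrium n \<alpha> \<beta> \<gamma> (\<lambda>i j. \<kappa>) a q \<and>
        Aq n a q = (1 / (1 + \<kappa>)) *\<^sub>R \<beta> \<and> (\<forall>i<n. q i = \<gamma> i / D)"
      using AQ unfolding q_def by blast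
  qed
qed

theorem proposition6:
  fixes n :: nat and \<alpha> \<kappa> :: real and \<beta> :: "real^'m" and \<gamma> :: "nat \<Rightarrow> real"
  assumes "n \<ge> 2" and "CARD('m) \<ge> 2"
    and "\<alpha> > 0" and "norm \<beta> = 1" and "\<forall>i<n. \<gamma> i > 0"
    and "\<kappa> \<ge> 0" and "2 + \<alpha> * (1 - \<kappa>) > 0"
  shows
    "(\<forall>(a :: nat \<Rightarrow> real^'m) q.
        equilibrium n \<alpha> \<beta> \<gamma> (\<lambda>i j. \<kappa>) a q \<and> rankA n a \<ge> 2 \<longrightarrow>
          Aq n a q = (1 / (1 + \<kappa>)) *\<^sub>R \<beta> \<and>
          (\<forall>i<n. q i = \<gamma> i / (2 + \<alpha> * (1 - \<kappa>))) \<and>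
          sbar n \<gamma> a = (((2 + \<alpha> * (1 - \<kappa>)) / (1 + \<kappa>))\<^sup>2 - norm2sq n \<gamma>)
                         / (real n * (real n - 1)))
     \<and>
     ((\<exists>(a :: nat \<Rightarrow> real^'m) q.
        equilibrium n \<alpha> \<beta> \<gamma> (\<lambda>i j. \<kappa>) a q \<and>
        Aq n a q = (1 / (1 + \<kappa>)) *\<^sub>R \<beta> \<and>
        (\<forall>i<n. q i = \<gamma> i / (2 + \<alpha> * (1 - \<kappa>))))
      \<longleftrightarrow> rfun n \<gamma> \<le> (2 + \<alpha> * (1 - \<kappa>)) / (1 + \<kappa>)
          \<and> (2 + \<alpha> * (1 - \<kappa>)) / (1 + \<kappa>) \<le> Rfun n \<gamma>)"
  proof (intro conjI)
  show "\<forall>(a :: nat \<Rightarrow> real^'m) q.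
        equilibrium n \<alpha> \<beta> \<gamma> (\<lambda>i j. \<kappa>) a q \<and> rankA n a \<ge> 2 \<longrightarrow>
          Aq n a q = (1 / (1 + \<kappa>)) *\<^sub>R \<beta> \<and>
          (\<forall>i<n. q i = \<gamma> i / (2 + \<alpha> * (1 - \<kappa>))) \<and>
          sbar n \<gamma> a = (((2 + \<alpha> * (1 - \<kappa>)) / (1 + \<kappa>))\<^sup>2 - norm2sq n \<gamma>)
                         / (real n * (real n - 1))"
    using part1[OF assms(1) assms(3-7)] by blast
  show "(\<exists>(a :: nat \<Rightarrow> real^'m) q.
        equilibrium n \<alpha> \<beta> \<gamma> (\<lambda>i j. \<kappa>) a q \<and>
        Aq n a q = (1 / (1 + \<kappa>)) *\<^sub>R \<beta> \<and>
        (\<forall>i<n. q i = \<gamma> i / (2 + \<alpha> * (1 - \<kappa>))))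
      \<longleftrightarrow> rfun n \<gamma> \<le> (2 + \<alpha> * (1 - \<kappa>)) / (1 + \<kappa>)
          \<and> (2 + \<alpha> * (1 - \<kappa>)) / (1 + \<kappa>) \<le> Rfun n \<gamma>"
    by (rule part2[OF assms])
qed

end
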